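(* Let $m,n\ge0$ and let $f_1,\dots,f_n,h_1,\dots,h_m$ be holomorphic functions on the unit disk. If $$\sum_{j=1}^n|f_j|^2=\sum_{k=1}^m|h_k|^2$$ on the disk, then $\{f_1,\dots,f_n,h_1,\dots,h_m\}$ is linearly dependent. *)

theory Defs
  imports "HOL-Analysis.Analysis"
begin

definition lin_dependent_on :: "complex set \<Rightarrow> (complex \<Rightarrow> complex) list \<Rightarrow> bool" where
  "lin_dependent_on S gs \<longleftrightarrow>
     (\<exists>c :: nat \<Rightarrow> complex. (\<exists>i<length gs. c i \<noteq> 0) \<and>
        (\<forall>z\<in>S. (\<Sum>i<length gs. c i * (gs ! i) z) = 0))"

end

theory Submission
  imports Defs "HOL-Complex_Analysis.Complex_Analysis"
begin

lemma step_lemma: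
  fixes D :: "nat \<Rightarrow> nat \<Rightarrow> complex \<Rightarrow> complex" and s :: "nat \<Rightarrow> complex"
  assumes S: "open S"
    and der: "\<And>a i z. z \<in> S \<Longrightarrow> (D a i has_field_derivative D (Suc a) i z) (at z)"
    and zero: "\<forall>z\<in>S. (\<Sum>i<N. s i * cnj (D a i z) * D b i z) = 0"
    and z: "z \<in> S"
  shows "(\<Sum>i<N. s i * cnj (D (Suc a) i z) * D b i z) = 0 \<and>
         (\<Sum>i<N. s i * cnj (D a i z) * D (Suc b) i z) = 0"
proof -
  define L where "L = (\<lambda>t. \<Sum>i<N. s i * (cnj (D (Suc a) i z * t) * D b i z
                      + cnj (D a i z) * (D (Suc b) i z * t)))"
  have d1: "((\<lambda>w. \<Sum>i<N. s i * cnj (D a i w) * D b i w) has_derivative L) (at z)"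
  proof -
    have "\<And>i. ((\<lambda>w. s i * cnj (D a i w) * D b i w) has_derivative
        (\<lambda>t. s i * (cnj (D (Suc a) i z * t) * D b i z
                      + cnj (D a i z) * (D (Suc b) i z * t)))) (at z)"
    proof -
      fix i
      have ha: "(D a i has_derivative (\<lambda>t. D (Suc a) i z * t)) (at z)"
        using der[OF z] has_field_derivative_imp_has_derivative by blast
      have hb: "(D b i has_derivative (\<lambda>t. D (Suc b) i z * t)) (at z)"
        using der[OF z] has_field_derivative_imp_has_derivative by blast
      have hc: "((\<lambda>w. cnj (D a i w)) has_derivative (\<lambda>t. cnj (D (Suc a) i z * t))) (at z)"
        using has_derivative_cnj[OF ha] .
      have "((\<lambda>w. cnj (D a i w) * D b i w) has_derivative
          (\<lambda>t. cnj (D a i z) * (D (Suc b) i z * t) + cnj (D (Suc a) i z * t) * D b i z)) (at z)"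
        using has_derivative_mult[OF hc hb] .
      then have "((\<lambda>w. s i * (cnj (D a i w) * D b i w)) has_derivative
          (\<lambda>t. s i * (cnj (D a i z) * (D (Suc b) i z * t) + cnj (D (Suc a) i z * t) * D b i z))) (at z)"
        by (rule has_derivative_mult_right)
      then show "?thesis i" by (simp add: mult.assoc add.commute)
    qed
    then show ?thesis unfolding L_def by (rule has_derivative_sum)
  qed
  have d2: "((\<lambda>w. \<Sum>i<N. s i * cnj (D a i w) * D b i w) has_derivative (\<lambda>t. 0)) (at z)"
    by (rule has_derivative_transform_within_open[of "\<lambda>w. 0" _ _ _ S]) (use S z zero in auto)
  have L0: "L = (\<lambda>t. 0)" using has_derivative_unique[OF d1 d2] .
  define P where "P = (\<Sum>i<N. s i * cnj (D (Suc a) i z) * D b i z)"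
  define Q where "Q = (\<Sum>i<N. s i * cnj (D a i z) * D (Suc b) i z)"
  have L1: "L 1 = P + Q"
    unfolding L_def P_def Q_def by (simp add: sum.distrib algebra_simps)
  have Li: "L \<i> = - \<i> * P + \<i> * Q"
  proof -
    have "L \<i> = (\<Sum>i<N. - \<i> * (s i * cnj (D (Suc a) i z) * D b i z) + \<i> * (s i * cnj (D a i z) * D (Suc b) i z))"
      unfolding L_def by (rule sum.cong) (auto simp: algebra_simps)
    also have "\<dots> = - \<i> * P + \<i> * Q"
      unfolding P_def Q_def by (simp only: sum.distrib sum_distrib_left)
    finally show ?thesis .
  qed
  have PQ: "P + Q = 0" using L1 L0 by simp
  have PQ2: "- \<i> * P + \<i> * Q = 0" using Li L0 by simp
  have Qe: "Q = - P" using PQ by (simp add: eq_neg_iff_add_eq_0 add.commute)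
  have "(- 2 * \<i>) * P = 0" using PQ2 unfolding Qe by (simp add: algebra_simps)
  then have "P = 0" by simp
  then have "P = 0 \<and> Q = 0" using Qe by simp
  then show ?thesis unfolding P_def Q_def by simp
qed


lemma cnj_mult_self: "cnj z * z = complex_of_real ((cmod z)\<^sup>2)"
  by (metis complex_mult_cnj cmod_power2 mult.commute)

lemma sum_split_add: "(\<Sum>i<(n::nat)+m. f i) = (\<Sum>i<n. f i) + (\<Sum>k<m. f (n+k))"
  by (induction m) (auto simp: add_ac)

lemma higher_deriv_lincomb:
  fixes D :: "nat \<Rightarrow> nat \<Rightarrow> complex \<Rightarrow> complex"
  assumes S: "open S"
    and der: "\<And>a i z. z \<in> S \<Longrightarrow> (D a i has_field_derivative D (Suc a) i z) (at z)"
  shows "w \<in> S \<Longrightarrow> (deriv ^^ n) (\<lambda>z. \<Sum>j<N. c j * D 0 j z) w = (\<Sum>j<N. c j * D n j w)"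
proof (induction n arbitrary: w)
  case 0
  then show ?case by simp
next
  case (Suc n)
  have ev: "\<forall>\<^sub>F x in nhds w. (deriv ^^ n) (\<lambda>z. \<Sum>j<N. c j * D 0 j z) x = (\<Sum>j<N. c j * D n j x)"
    using Suc.IH eventually_nhds_in_open[OF S Suc.prems] by (auto elim: eventually_mono)
  have "(deriv ^^ Suc n) (\<lambda>z. \<Sum>j<N. c j * D 0 j z) w
        = deriv (\<lambda>x. \<Sum>j<N. c j * D n j x) w"
    using deriv_cong_ev[OF ev refl] by simp
  also have "\<dots> = (\<Sum>j<N. c j * D (Suc n) j w)"
    by (rule DERIV_imp_deriv, rule DERIV_sum, rule DERIV_cmult, rule der[OF Suc.prems])
  finally show ?case .
qed

theorem lemma7p4:
  fixes fs hs :: "(complex \<Rightarrow> complex) list"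
  assumes nonempty: "fs @ hs \<noteq> []"
    and holf: "\<forall>f\<in>set fs. f holomorphic_on ball 0 1"
    and holh: "\<forall>h\<in>set hs. h holomorphic_on ball 0 1"
    and eq: "\<forall>z\<in>ball 0 1.
               (\<Sum>j<length fs. (cmod ((fs ! j) z))\<^sup>2) = (\<Sum>k<length hs. (cmod ((hs ! k) z))\<^sup>2)"
  shows "lin_dependent_on (ball 0 1) (fs @ hs)"
proof -
  define gs where "gs = fs @ hs"
  define N where "N = length gs"
  define G where "G i = (if i < N then gs ! i else (\<lambda>_::complex. 0::complex))" for i
  define D where "D a i = (deriv ^^ a) (G i)" for a i
  define s :: "nat \<Rightarrow> complex" where "s i = (if i < length fs then 1 else -1)" for i
  let ?B = "ball (0::complex) 1"
  have holG: "G i holomorphic_on ?B" for i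
  proof (cases "i < N")
    case True
    then have "gs ! i \<in> set fs \<union> set hs" unfolding N_def gs_def
      by (metis nth_mem set_append)
    then show ?thesis using holf holh True unfolding G_def by auto
  next
    case False
    then show ?thesis unfolding G_def by simp
  qed
  have der: "(D a i has_field_derivative D (Suc a) i z) (at z)" if "z \<in> ?B" for a i z
  proof -
    have "D a i holomorphic_on ?B" unfolding D_def by (rule holomorphic_higher_deriv[OF holG]) simp
    from holomorphic_derivI[OF this _ that] show ?thesis unfolding D_def by simp
  qed
  define q where "q a b z = (\<Sum>i<N. s i * cnj (D a i z) * D b i z)" for a b z
  have base: "q 0 0 z = 0" if "z \<in> ?B" for z
  proof -
    have "q 0 0 z = (\<Sum>i<length fs + length hs. s i * cnj (G i z) * G i z)"
      unfolding q_def D_def N_def gs_def by simp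
    also have "\<dots> = (\<Sum>j<length fs. of_real ((cmod ((fs ! j) z))\<^sup>2))
                    + (\<Sum>k<length hs. - of_real ((cmod ((hs ! k) z))\<^sup>2))"
      unfolding sum_split_add
      by (intro arg_cong2[where f="(+)"] sum.cong refl)
         (auto simp: G_def s_def N_def gs_def nth_append cnj_mult_self mult.assoc)
    also have "\<dots> = (\<Sum>j<length fs. of_real ((cmod ((fs ! j) z))\<^sup>2))
                    - (\<Sum>k<length hs. of_real ((cmod ((hs ! k) z))\<^sup>2))"
      by (simp add: sum_negf)
    also have "\<dots> = 0"
    proof -
      have "(\<Sum>j<length fs. (cmod ((fs ! j) z))\<^sup>2) = (\<Sum>k<length hs. (cmod ((hs ! k) z))\<^sup>2)"
        using eq that by blast
      then have "complex_of_real (\<Sum>j<length fs. (cmod ((fs ! j) z))\<^sup>2)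
               = complex_of_real (\<Sum>k<length hs. (cmod ((hs ! k) z))\<^sup>2)" by simp
      then show ?thesis unfolding of_real_sum by simp
    qed
    finally show ?thesis .
  qed
  have stepq: "(\<forall>z\<in>?B. q (Suc a) b z = 0) \<and> (\<forall>z\<in>?B. q a (Suc b) z = 0)"
    if "\<forall>z\<in>?B. q a b z = 0" for a b
    using step_lemma[of ?B D, OF _ der] that unfolding q_def by auto
  have allq: "\<forall>z\<in>?B. q a b z = 0" for a b
  proof (induction a arbitrary: b)
    case 0
    show ?case
    proof (induction b)
      case 0
      then show ?case using base by auto
    next
      case (Suc b)
      then show ?case using stepq by blast
    qed
  next
    case (Suc a)
    then show ?case using stepq by blast
  qed
  have N0: "N > 0" using nonempty unfolding N_def gs_def by simp
  have Gnth: "G j z = (gs ! j) z" if "j < N" for j z using that unfolding G_def by simp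
  show ?thesis
  proof (cases "\<exists>a i. i < N \<and> D a i 0 \<noteq> 0")
    case True
    then obtain a i where ai: "i < N" "D a i 0 \<noteq> 0" by blast
    define c where "c j = s j * cnj (D a j 0)" for j
    have ci: "c i \<noteq> 0" using ai unfolding c_def s_def by auto
    have hol: "(\<lambda>z. \<Sum>j<N. c j * D 0 j z) holomorphic_on ?B"
      unfolding D_def using holG by (auto intro!: holomorphic_intros)
    have "(\<Sum>j<N. c j * D 0 j w) = 0" if "w \<in> ?B" for w
    proof (rule holomorphic_fun_eq_0_on_connected[OF hol, of 0 w])
      fix n
      have "(deriv ^^ n) (\<lambda>z. \<Sum>j<N. c j * D 0 j z) 0 = (\<Sum>j<N. c j * D n j 0)"
        by (rule higher_deriv_lincomb[of ?B D], auto intro: der)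
      also have "\<dots> = q a n 0" unfolding q_def c_def by (simp add: mult.assoc)
      also have "\<dots> = 0" using allq by simp
      finally show "(deriv ^^ n) (\<lambda>z. \<Sum>j<N. c j * D 0 j z) 0 = 0" .
    qed (use that in auto)
    then show ?thesis unfolding lin_dependent_on_def
      using ai ci Gnth unfolding N_def gs_def D_def
      by (intro exI[of _ c]) (auto simp: N_def gs_def)
  next
    case False
    have "G j w = 0" if "j < N" "w \<in> ?B" for j w
      by (rule holomorphic_fun_eq_0_on_connected[OF holG[of j], of 0 w])
         (use False that in \<open>auto simp: D_def\<close>)
    then show ?thesis unfolding lin_dependent_on_def
      using N0 Gnth unfolding N_def gs_def
      by (intro exI[of _ "\<lambda>_. 1"]) auto
  qed
qed

end
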